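(* The fine time-grid propagators $\Psi_j=(M_s+\tau_j Q_s)^{-1}M_s$, $j=1,\dots,N$, and the coarse time-grid propagators $\Phi_k=(M_s+\tilde{\tau}_k Q_s)^{-1}M_s$, $k=1,\dots,N_c$, are both strongly stable, i.e. their discrete $l^2$-norms satisfy $\|\Psi_j\|<1$ and $\|\Phi_k\|<1$.
   Context: Setting: the unsteady fractional Laplacian problem $\partial_t u=-(-\Delta)^{\alpha/2}u+f$ on a bounded Lipschitz domain $\Omega\subset\mathbb{R}^d$ with $\alpha\in(0,2)$ is reformulated via the Caffarelli–Silvestre extension on the truncated cylinder $\Omega\times(0,\mathcal{Z})$ with weight $z^\beta$, $\beta=1-\alpha$, and discretized by tensor-product $\mathcal{P}_1\otimes\mathcal{P}_1$ finite elements (spatial basis $\phi_i$, $i=1,\dots,n$; extended-direction basis $\psi_j$, $j=1,\dots,M-1$) and backward Euler in time on a (possibly nonuniform) mesh $0=t_0<\dots<t_N=T$ with steps $\tau_j=t_j-t_{j-1}$. The matrices are $M_s=(\frac{1}{d_\alpha}\int_\Omega\phi_i\phi_q)$, $A_s=(\frac{1}{d_\alpha}\int_\Omega\nabla\phi_i\cdot\nabla\phi_q)$, $M_z=(\int_0^{\mathcal{Z}}z^\beta\psi_j\psi_l)$, $A_z=(\int_0^{\mathcal{Z}}z^\beta\psi_j'\psi_l')$, with $d_\alpha>0$ a normalization constant. Eliminating the auxiliary (non-trace) unknowns gives the time-stepping $(M_s+\tau_{k+1}Q_s)\mathcal{U}_{k+1}=M_s\mathcal{U}_k+\tau_{k+1}\mathcal{F}_{k+1}$,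 where $Q_s$ is the Schur complement $Q_s=(m^z_{11}A_s+a^z_{11}M_s)-(\tilde m_z\otimes A_s+\tilde a_z\otimes M_s)(\tilde M_z\otimes A_s+\tilde A_z\otimes M_s)^{-1}(\tilde m_z^T\otimes A_s+\tilde a_z^T\otimes M_s)$, with $\tilde m_z,\tilde a_z$ the first rows of $M_z,A_z$ without the first entry and $\tilde M_z,\tilde A_z$ the trailing principal submatrices (indices $2,\dots,M-1$); $M_s$ and $M_s^{-1/2}Q_sM_s^{-1/2}$ are SPD. For a coarsening factor $m$, the coarse time grid is $\tilde t_i=t_{mi}$, $i=0,\dots,N_c=N/m$, with steps $\tilde\tau_k=\tilde t_k-\tilde t_{k-1}$. *)

theory Defs
  imports "HOL-Analysis.Analysis"
begin

definition spd :: "real^'n^'n \<Rightarrow> bool" where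
  "spd A \<longleftrightarrow> transpose A = A \<and> (\<forall>x::real^'n. x \<noteq> 0 \<longrightarrow> x \<bullet> (A *v x) > 0)"

text \<open>Discrete l2 (mass-matrix weighted) norm of a coefficient vector: sqrt(x^T M x).\<close>
definition Mnorm :: "real^'n^'n \<Rightarrow> real^'n \<Rightarrow> real" where
  "Mnorm M x = sqrt (x \<bullet> (M *v x))"

definition Mopnorm :: "real^'n^'n \<Rightarrow> real^'n^'n \<Rightarrow> real" where
  "Mopnorm M A = (SUP x\<in>{x::real^'n. x \<noteq> 0}. Mnorm M (A *v x) / Mnorm M x)"

definition propagator :: "real^'n^'n \<Rightarrow> real^'n^'n \<Rightarrow> real \<Rightarrow> real^'n^'n" where
  "propagator M Q tau = matrix_inv (M + tau *\<^sub>R Q) ** M"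

end

theory Submission
  imports Defs
begin

lemma inv_of_ker:
  fixes A :: "real^'n^'n"
  assumes "\<And>x. A *v x = 0 \<Longrightarrow> x = 0"
  shows "A ** matrix_inv A = mat 1 \<and> matrix_inv A ** A = mat 1"
proof -
  have "invertible A" using assms invertible_left_inverse matrix_left_invertible_ker by blast
  then have "\<exists>A'. A ** A' = mat 1 \<and> A' ** A = mat 1" by (simp add: invertible_def)
  then show ?thesis unfolding matrix_inv_def by (rule someI_ex)
qed

lemma coercive:
  fixes B :: "real^'n^'n"
  assumes "spd B"
  shows "\<exists>c>0. \<forall>z. c * (z \<bullet> z) \<le> z \<bullet> (B *v z)"
proof -
  have "compact (sphere (0::real^'n) 1)" by simp
  moreover have "sphere (0::real^'n) 1 \<noteq> {}" by (simp add: sphere_eq_empty)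
  moreover have "continuous_on (sphere 0 1) (\<lambda>z::real^'n. z \<bullet> (B *v z))"
    by (intro continuous_intros)
  ultimately obtain u where u: "u \<in> sphere 0 1" and umin: "\<And>z. z \<in> sphere 0 1 \<Longrightarrow> u \<bullet> (B *v u) \<le> z \<bullet> (B *v z)"
    using continuous_attains_inf[of "sphere (0::real^'n) 1" "\<lambda>z. z \<bullet> (B *v z)"] by auto
  have "u \<noteq> 0" using u by auto
  then have cpos: "u \<bullet> (B *v u) > 0" using assms by (simp add: spd_def)
  show ?thesis
  proof (intro exI conjI allI)
    show "0 < u \<bullet> (B *v u)" by (rule cpos)
    fix z :: "real^'n"
    show "u \<bullet> (B *v u) * (z \<bullet> z) \<le> z \<bullet> (B *v z)"
    proof (cases "z = 0")
      case True then show ?thesis by simp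
    next
      case False
      define w where "w = (1 / norm z) *\<^sub>R z"
      have nz: "norm z > 0" using False by simp
      have "w \<in> sphere 0 1" using nz by (simp add: w_def)
      then have h: "u \<bullet> (B *v u) \<le> w \<bullet> (B *v w)" by (rule umin)
      have zw: "z = norm z *\<^sub>R w" using nz by (simp add: w_def)
      have "z \<bullet> (B *v z) = (norm z)^2 * (w \<bullet> (B *v w))"
        by (subst zw, subst zw) (simp add: matrix_vector_mult_scaleR power2_eq_square)
      moreover have "z \<bullet> z = (norm z)^2" by (simp add: power2_norm_eq_inner)
      moreover have "u \<bullet> (B *v u) * (norm z)^2 \<le> w \<bullet> (B *v w) * (norm z)^2"
        using h by (rule mult_right_mono) simp
      ultimately show ?thesis by (simp add: mult.commute)
    qed
  qed
qed

lemma main: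
  fixes M Q H :: "real^'n^'n" and tau :: real
  assumes Hspd: "spd H" and Hsq: "H ** H = M"
    and Bspd: "spd (matrix_inv H ** Q ** matrix_inv H)"
    and tau: "tau > 0"
  shows "Mopnorm M (propagator M Q tau) < 1"
proof -
  define Hi where "Hi = matrix_inv H"
  define B where "B = Hi ** Q ** Hi"
  have Hker: "\<And>x. H *v x = 0 \<Longrightarrow> x = 0"
  proof (rule ccontr)
    fix x assume "H *v x = 0" "x \<noteq> 0"
    then show False using Hspd by (auto simp: spd_def)
  qed
  have Hinv: "H ** Hi = mat 1" "Hi ** H = mat 1" using inv_of_ker[OF Hker] by (auto simp: Hi_def)
  have QB: "Q = H ** B ** H"
  proof -
    have "H ** B ** H = (H ** Hi) ** Q ** (Hi ** H)" by (simp add: B_def matrix_mul_assoc)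
    then show ?thesis using Hinv by (simp add: matrix_mul_lid matrix_mul_rid)
  qed
  have Hsym: "\<And>x y. x \<bullet> (H *v y) = (H *v x) \<bullet> y"
  proof -
    fix x y
    have "transpose H = H" using Hspd by (simp add: spd_def)
    then have "x v* H = H *v x" by (metis transpose_matrix_vector)
    then show "x \<bullet> (H *v y) = (H *v x) \<bullet> y" by (metis dot_lmul_matrix)
  qed
  have Mform: "\<And>x y. y \<bullet> (M *v x) = (H *v y) \<bullet> (H *v x)"
    using Hsym by (simp add: Hsq[symmetric] matrix_vector_mul_assoc[symmetric])
  have Mn: "\<And>x. Mnorm M x = norm (H *v x)"
    by (simp add: Mnorm_def Mform norm_eq_sqrt_inner)
  have Qform: "\<And>y. y \<bullet> (Q *v y) = (H *v y) \<bullet> (B *v (H *v y))"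
    using Hsym by (simp add: QB matrix_vector_mul_assoc[symmetric])
  obtain c where c: "c > 0" "\<And>z. c * (z \<bullet> z) \<le> z \<bullet> (B *v z)"
    using coercive[of B] Bspd by (auto simp: B_def Hi_def)
  define P where "P = M + tau *\<^sub>R Q"
  have Pform: "\<And>y. y \<bullet> (P *v y) \<ge> (1 + tau * c) * (norm (H *v y))^2"
  proof -
    fix y
    have "y \<bullet> (P *v y) = y \<bullet> (M *v y) + tau * (y \<bullet> (Q *v y))"
      by (simp add: P_def matrix_vector_mult_add_rdistrib scaleR_matrix_vector_assoc[symmetric] inner_add_right)
    also have "\<dots> = (norm (H *v y))^2 + tau * ((H *v y) \<bullet> (B *v (H *v y)))"
      by (simp add: Mform Qform power2_norm_eq_inner)
    also have "\<dots> \<ge> (norm (H *v y))^2 + tau * (c * (norm (H *v y))^2)"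
      using c(2)[of "H *v y"] tau by (simp add: power2_norm_eq_inner)
    finally show "y \<bullet> (P *v y) \<ge> (1 + tau * c) * (norm (H *v y))^2" by (simp add: algebra_simps)
  qed
  have Pker: "\<And>x. P *v x = 0 \<Longrightarrow> x = 0"
  proof (rule ccontr)
    fix x assume a: "P *v x = 0" "x \<noteq> 0"
    have "H *v x \<noteq> 0" using a Hker by blast
    then have "(1 + tau * c) * (norm (H *v x))^2 > 0" using tau c(1) by (intro mult_pos_pos) (auto simp: add_pos_pos)
    then show False using Pform[of x] a by simp
  qed
  have Pinv: "P ** matrix_inv P = mat 1" using inv_of_ker[OF Pker] by auto
  define r where "r = 1 / (1 + tau * c)"
  have r1: "r < 1" unfolding r_def using tau c(1) by (simp add: divide_less_eq add_pos_pos)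
  have bound: "Mnorm M (propagator M Q tau *v x) / Mnorm M x \<le> r" if x: "x \<noteq> 0" for x
  proof -
    define y where "y = propagator M Q tau *v x"
    have Py: "P *v y = M *v x"
    proof -
      have "P *v y = (P ** matrix_inv P ** M) *v x"
        by (simp add: y_def propagator_def P_def[symmetric] matrix_vector_mul_assoc matrix_mul_assoc)
      also have "\<dots> = M *v x" by (simp add: Pinv matrix_mul_lid)
      finally show ?thesis .
    qed
    have pos: "norm (H *v x) > 0" using x Hker by auto
    have "(1 + tau * c) * (norm (H *v y))^2 \<le> y \<bullet> (P *v y)" by (rule Pform)
    also have "\<dots> = (H *v y) \<bullet> (H *v x)" by (simp add: Py Mform)
    also have "\<dots> \<le> norm (H *v y) * norm (H *v x)" by (rule norm_cauchy_schwarz)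
    finally have ineq: "(1 + tau * c) * (norm (H *v y))^2 \<le> norm (H *v y) * norm (H *v x)" .
    have "(1 + tau * c) * norm (H *v y) \<le> norm (H *v x)"
    proof (cases "norm (H *v y) = 0")
      case True then show ?thesis by simp
    next
      case False
      then have "norm (H *v y) > 0" by simp
      then show ?thesis using ineq by (simp add: power2_eq_square mult.assoc[symmetric])
    qed
    moreover have "1 + tau * c > 0" using tau c(1) by (simp add: add_pos_pos)
    ultimately have "norm (H *v y) \<le> r * norm (H *v x)"
      by (simp add: r_def le_divide_eq mult.commute)
    then show ?thesis using pos by (simp add: Mn y_def[symmetric] divide_le_eq)
  qed
  have ne: "{x::real^'n. x \<noteq> 0} \<noteq> {}"
  proof -
    have "(axis undefined (1::real) :: real^'n) $ undefined = 1" by (rule axis_nth)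
    then have "(axis undefined (1::real) :: real^'n) \<noteq> 0" by (metis zero_index zero_neq_one)
    then show ?thesis by blast
  qed
  have "Mopnorm M (propagator M Q tau) \<le> r"
    unfolding Mopnorm_def by (rule cSUP_least[OF ne]) (use bound in auto)
  then show ?thesis using r1 by simp
qed

theorem theorem2:
  fixes Ms Qs Ms_half :: "real^'n^'n"
    and t :: "nat \<Rightarrow> real" and T :: real and N m :: nat
  assumes Ms_spd: "spd Ms"
    and half_spd: "spd Ms_half" and half_sq: "Ms_half ** Ms_half = Ms"
    and Q_spd: "spd (matrix_inv Ms_half ** Qs ** matrix_inv Ms_half)"
    and t0: "t 0 = 0" and tN: "t N = T"
    and t_mono: "\<And>j. j < N \<Longrightarrow> t j < t (Suc j)"
    and m_pos: "m \<ge> 1" and m_dvd: "m dvd N"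
  shows "(\<forall>j \<in> {1..N}. Mopnorm Ms (propagator Ms Qs (t j - t (j - 1))) < 1)
       \<and> (\<forall>k \<in> {1..N div m}. Mopnorm Ms (propagator Ms Qs (t (m * k) - t (m * (k - 1)))) < 1)"
proof -
  have smono: "t a < t b" if "a < b" "b \<le> N" for a b
    using that
  proof (induction b)
    case 0 then show ?case by simp
  next
    case (Suc b)
    then show ?case using t_mono[of b]
      by (cases "a = b") (auto simp: less_Suc_eq)
  qed
  show ?thesis
  proof (intro conjI ballI)
    fix j assume "j \<in> {1..N}"
    then have "t (j - 1) < t j" using smono[of "j - 1" j] by auto
    then show "Mopnorm Ms (propagator Ms Qs (t j - t (j - 1))) < 1"
      using main[OF half_spd half_sq Q_spd] by simp
  next
    fix k assume k: "k \<in> {1..N div m}"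
    have "m * k \<le> N" using k m_pos m_dvd
      by (metis atLeastAtMost_iff dvd_mult_div_cancel mult_le_mono2)
    moreover have "m * (k - 1) < m * k" using k m_pos by auto
    ultimately have "t (m * (k - 1)) < t (m * k)" using smono by blast
    then show "Mopnorm Ms (propagator Ms Qs (t (m * k) - t (m * (k - 1)))) < 1"
      using main[OF half_spd half_sq Q_spd] by simp
  qed
qed

end
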